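(* Let $\mathcal{M}=(M_i\colon i\in K)$ be a family of matroids on a common ground set $E$, let $\mathcal{F}=(\langle I_i,S_i\rangle\colon i\in K)$ be feasible with respect to $\mathcal{M}$, let $X$ be $\mathcal{M}(\mathcal{F})$-tight, and let $(R_i\colon i\in K)$ be a covering of $\mathcal{M}(\mathcal{F})\restriction X$. Then $\mathcal{F}'=(\langle I_i\cup R_i,S_i\rangle\colon i\in K)$ is a feasible extension of $\mathcal{F}$ with respect to $\mathcal{M}$, and $I_i\cup R_i$ spans $X\cap S_i$ in $M_i$ for every $i\in K$. Furthermore, if $X$ is the $\subseteq$-largest $\mathcal{M}(\mathcal{F})$-tight set, then there is no non-empty $\mathcal{M}(\mathcal{F}')$-tight set.
   Context: Matroids are possibly infinite (independence axioms: $\emptyset$ independent, closure under subsets, augmentation relative to maximal independent sets, and every independent subset of any $X\subseteq E$ extends to a maximal independent subset of $X$). Circuits are minimal dependent sets; $X$ spans $e$ if $e\in X$ or some circuit $C\ni e$ has $C\setminus\{e\}\subseteq X$; a set is spanning if it spans the whole ground set. Minors: $M\restriction X=(X,\mathcal{I}\cap\mathcal{P}(X))$, $M\setminus X=M\restriction(E\setminus X)$, $M^*$ is the matroid whose bases are the complements of bases of $M$, and $M/X=(M^*\setminus X)^*$. Declaring the elements of $X$ to be loops gives $M\setminus X\oplus(X,\{\emptyset\})$. For a family $(N_i\colon i\in K)$ on a set $Y$: a covering is $(R_i)$ with $R_i$ independent in $N_i$ and $\bigcup R_i=Y$; a packing is $(P_i)$ pairwise disjoint with $P_i$ spanning in $N_i$;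 the family is tight if it admits a covering and every covering has each $R_i$ spanning in $N_i$; $X\subseteq Y$ is tight (w.r.t. the family) if $(N_i\restriction X)$ is tight. Consider families $\mathcal{F}=(\langle I_i,S_i\rangle\colon i\in K)$ with $I_i\subseteq S_i\subseteq E$, $I_i$ independent and $S_i$ spanning in $M_i$, $I_i\cap I_j=\emptyset$ for $i\neq j$, and $\bigcup_i S_i=E$. $\mathcal{F}$ is covering-feasible if there is a covering $(R_i)$ of $\mathcal{M}$ with $I_i\subseteq R_i\subseteq S_i$, packing-feasible if there is a packing $(P_i)$ of $\mathcal{M}$ with $I_i\subseteq P_i\subseteq S_i$, and feasible if both. $\mathcal{F}'=(\langle I_i',S_i'\rangle)$ is an extension of $\mathcal{F}$ if $I_i\subseteq I_i'\subseteq S_i'\subseteq S_i$ for all $i$. $\mathcal{M}(\mathcal{F})=(M_i(\mathcal{F})\colon i\in K)$, where $M_i(\mathcal{F})$ is the matroid on $E\setminus\bigcup_{j\in K}I_j$ obtained from $M_i$ by contracting $I_i$, deleting $\bigcup_{j\neq i}I_j$, and declaring the remaining elements not in $S_i$ to be loops. *)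

theory Defs
  imports Main
begin

record 'a matroid =
  ground :: "'a set"
  indeps :: "'a set set"

definition indep :: "'a matroid \<Rightarrow> 'a set \<Rightarrow> bool" where
  "indep M I \<longleftrightarrow> I \<in> indeps M"

definition base :: "'a matroid \<Rightarrow> 'a set \<Rightarrow> bool" where
  "base M B \<longleftrightarrow> indep M B \<and> (\<forall>J. indep M J \<and> B \<subseteq> J \<longrightarrow> J = B)"

definition max_indep_in :: "'a matroid \<Rightarrow> 'a set \<Rightarrow> 'a set \<Rightarrow> bool" where
  "max_indep_in M X B \<longleftrightarrow> indep M B \<and> B \<subseteq> X \<and>
     (\<forall>J. indep M J \<and> B \<subseteq> J \<and> J \<subseteq> X \<longrightarrow> J = B)"

definition matroid :: "'a matroid \<Rightarrow> bool" where
  "matroid M \<longleftrightarrow>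
     (\<forall>I. indep M I \<longrightarrow> I \<subseteq> ground M) \<and>
     indep M {} \<and>
     (\<forall>I J. indep M J \<and> I \<subseteq> J \<longrightarrow> indep M I) \<and>
     (\<forall>I I'. indep M I \<and> \<not> base M I \<and> base M I' \<longrightarrow>
        (\<exists>x \<in> I' - I. indep M (insert x I))) \<and>
     (\<forall>X I. X \<subseteq> ground M \<and> indep M I \<and> I \<subseteq> X \<longrightarrow>
        (\<exists>B. I \<subseteq> B \<and> max_indep_in M X B))"

definition circuit :: "'a matroid \<Rightarrow> 'a set \<Rightarrow> bool" where
  "circuit M C \<longleftrightarrow> C \<subseteq> ground M \<and> \<not> indep M C \<and>
     (\<forall>D. D \<subset> C \<longrightarrow> indep M D)"

definition spans :: "'a matroid \<Rightarrow> 'a set \<Rightarrow> 'a \<Rightarrow> bool" where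
  "spans M X e \<longleftrightarrow> e \<in> X \<or> (\<exists>C. circuit M C \<and> e \<in> C \<and> C - {e} \<subseteq> X)"

definition spans_set :: "'a matroid \<Rightarrow> 'a set \<Rightarrow> 'a set \<Rightarrow> bool" where
  "spans_set M X Y \<longleftrightarrow> (\<forall>e \<in> Y. spans M X e)"

definition spanning :: "'a matroid \<Rightarrow> 'a set \<Rightarrow> bool" where
  "spanning M X \<longleftrightarrow> X \<subseteq> ground M \<and> spans_set M X (ground M)"

definition restrict :: "'a matroid \<Rightarrow> 'a set \<Rightarrow> 'a matroid" where
  "restrict M X = \<lparr> ground = X, indeps = {I \<in> indeps M. I \<subseteq> X} \<rparr>"

definition delete :: "'a matroid \<Rightarrow> 'a set \<Rightarrow> 'a matroid" where
  "delete M X = restrict M (ground M - X)"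

definition dual :: "'a matroid \<Rightarrow> 'a matroid" where
  "dual M = \<lparr> ground = ground M,
              indeps = {I. I \<subseteq> ground M \<and> (\<exists>B. base M B \<and> I \<subseteq> ground M - B)} \<rparr>"

definition contract :: "'a matroid \<Rightarrow> 'a set \<Rightarrow> 'a matroid" where
  "contract M X = dual (delete (dual M) X)"

text \<open>Direct sum of two matroids (used with disjoint ground sets).\<close>
definition direct_sum :: "'a matroid \<Rightarrow> 'a matroid \<Rightarrow> 'a matroid" where
  "direct_sum M N = \<lparr> ground = ground M \<union> ground N,
     indeps = {I \<union> J | I J. I \<in> indeps M \<and> J \<in> indeps N} \<rparr>"

definition make_loops :: "'a matroid \<Rightarrow> 'a set \<Rightarrow> 'a matroid" where
  "make_loops M X = direct_sum (delete M X) \<lparr> ground = X, indeps = {{}} \<rparr>"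

definition covering :: "('k \<Rightarrow> 'a matroid) \<Rightarrow> 'k set \<Rightarrow> 'a set \<Rightarrow> ('k \<Rightarrow> 'a set) \<Rightarrow> bool" where
  "covering N K Y R \<longleftrightarrow> (\<forall>i \<in> K. indep (N i) (R i)) \<and> (\<Union>i \<in> K. R i) = Y"

definition packing :: "('k \<Rightarrow> 'a matroid) \<Rightarrow> 'k set \<Rightarrow> 'a set \<Rightarrow> ('k \<Rightarrow> 'a set) \<Rightarrow> bool" where
  "packing N K Y P \<longleftrightarrow> (\<forall>i \<in> K. \<forall>j \<in> K. i \<noteq> j \<longrightarrow> P i \<inter> P j = {}) \<and>
     (\<forall>i \<in> K. spanning (N i) (P i))"

definition tight_family :: "('k \<Rightarrow> 'a matroid) \<Rightarrow> 'k set \<Rightarrow> 'a set \<Rightarrow> bool" where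
  "tight_family N K Y \<longleftrightarrow> (\<exists>R. covering N K Y R) \<and>
     (\<forall>R. covering N K Y R \<longrightarrow> (\<forall>i \<in> K. spanning (N i) (R i)))"

definition tight_set :: "('k \<Rightarrow> 'a matroid) \<Rightarrow> 'k set \<Rightarrow> 'a set \<Rightarrow> 'a set \<Rightarrow> bool" where
  "tight_set N K Y X \<longleftrightarrow> X \<subseteq> Y \<and> tight_family (\<lambda>i. restrict (N i) X) K X"

definition matroid_family :: "('k \<Rightarrow> 'a matroid) \<Rightarrow> 'k set \<Rightarrow> 'a set \<Rightarrow> bool" where
  "matroid_family M K E \<longleftrightarrow> (\<forall>i \<in> K. matroid (M i) \<and> ground (M i) = E)"

definition valid_pairs ::
  "('k \<Rightarrow> 'a matroid) \<Rightarrow> 'k set \<Rightarrow> 'a set \<Rightarrow> ('k \<Rightarrow> 'a set) \<Rightarrow> ('k \<Rightarrow> 'a set) \<Rightarrow> bool" where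
  "valid_pairs M K E I S \<longleftrightarrow>
     (\<forall>i \<in> K. I i \<subseteq> S i \<and> S i \<subseteq> E \<and> indep (M i) (I i) \<and> spanning (M i) (S i)) \<and>
     (\<forall>i \<in> K. \<forall>j \<in> K. i \<noteq> j \<longrightarrow> I i \<inter> I j = {}) \<and>
     (\<Union>i \<in> K. S i) = E"

definition covering_feasible ::
  "('k \<Rightarrow> 'a matroid) \<Rightarrow> 'k set \<Rightarrow> 'a set \<Rightarrow> ('k \<Rightarrow> 'a set) \<Rightarrow> ('k \<Rightarrow> 'a set) \<Rightarrow> bool" where
  "covering_feasible M K E I S \<longleftrightarrow>
     (\<exists>R. covering M K E R \<and> (\<forall>i \<in> K. I i \<subseteq> R i \<and> R i \<subseteq> S i))"

definition packing_feasible ::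
  "('k \<Rightarrow> 'a matroid) \<Rightarrow> 'k set \<Rightarrow> 'a set \<Rightarrow> ('k \<Rightarrow> 'a set) \<Rightarrow> ('k \<Rightarrow> 'a set) \<Rightarrow> bool" where
  "packing_feasible M K E I S \<longleftrightarrow>
     (\<exists>P. packing M K E P \<and> (\<forall>i \<in> K. I i \<subseteq> P i \<and> P i \<subseteq> S i))"

definition feasible ::
  "('k \<Rightarrow> 'a matroid) \<Rightarrow> 'k set \<Rightarrow> 'a set \<Rightarrow> ('k \<Rightarrow> 'a set) \<Rightarrow> ('k \<Rightarrow> 'a set) \<Rightarrow> bool" where
  "feasible M K E I S \<longleftrightarrow> covering_feasible M K E I S \<and> packing_feasible M K E I S"

definition extension ::
  "'k set \<Rightarrow> ('k \<Rightarrow> 'a set) \<Rightarrow> ('k \<Rightarrow> 'a set) \<Rightarrow> ('k \<Rightarrow> 'a set) \<Rightarrow> ('k \<Rightarrow> 'a set) \<Rightarrow> bool" where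
  "extension K I S I' S' \<longleftrightarrow> (\<forall>i \<in> K. I i \<subseteq> I' i \<and> I' i \<subseteq> S' i \<and> S' i \<subseteq> S i)"

definition rest_ground :: "'k set \<Rightarrow> 'a set \<Rightarrow> ('k \<Rightarrow> 'a set) \<Rightarrow> 'a set" where
  "rest_ground K E I = E - (\<Union>j \<in> K. I j)"

definition reduced_matroid ::
  "('k \<Rightarrow> 'a matroid) \<Rightarrow> 'k set \<Rightarrow> 'a set \<Rightarrow> ('k \<Rightarrow> 'a set) \<Rightarrow> ('k \<Rightarrow> 'a set) \<Rightarrow> 'k \<Rightarrow> 'a matroid" where
  "reduced_matroid M K E I S i =
     make_loops (delete (contract (M i) (I i)) (\<Union>j \<in> K - {i}. I j))
                (rest_ground K E I - S i)"

end

theory Submission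
  imports Defs
begin

lemma m_ground: "matroid M \<Longrightarrow> indep M I \<Longrightarrow> I \<subseteq> ground M"
  unfolding matroid_def by (elim conjE) (erule allE, erule mp)
lemma m_empty: "matroid M \<Longrightarrow> indep M {}"
  unfolding matroid_def by (elim conjE) assumption
lemma m_subset_all: "matroid M \<Longrightarrow> (\<forall>I J. indep M J \<and> I \<subseteq> J \<longrightarrow> indep M I)"
  unfolding matroid_def by (elim conjE) assumption
lemma m_subset: "matroid M \<Longrightarrow> indep M J \<Longrightarrow> I \<subseteq> J \<Longrightarrow> indep M I"
  using m_subset_all by blast
lemma m_aug_all: "matroid M \<Longrightarrow> (\<forall>I I'. indep M I \<and> \<not> base M I \<and> base M I' \<longrightarrow>
        (\<exists>x \<in> I' - I. indep M (insert x I)))"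
  unfolding matroid_def by (elim conjE) assumption
lemma m_aug: "matroid M \<Longrightarrow> indep M I \<Longrightarrow> \<not> base M I \<Longrightarrow> base M B \<Longrightarrow> \<exists>x\<in>B-I. indep M (insert x I)"
  using m_aug_all by blast
lemma m_max_all: "matroid M \<Longrightarrow> (\<forall>X I. X \<subseteq> ground M \<and> indep M I \<and> I \<subseteq> X \<longrightarrow>
        (\<exists>B. I \<subseteq> B \<and> max_indep_in M X B))"
  unfolding matroid_def by (elim conjE) assumption
lemma m_max: "matroid M \<Longrightarrow> X \<subseteq> ground M \<Longrightarrow> indep M I \<Longrightarrow> I \<subseteq> X \<Longrightarrow> \<exists>B. I \<subseteq> B \<and> max_indep_in M X B"
  using m_max_all by blast

lemma maxD: "max_indep_in M X B \<Longrightarrow> indep M B"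
  unfolding max_indep_in_def by blast
lemma maxS: "max_indep_in M X B \<Longrightarrow> B \<subseteq> X"
  unfolding max_indep_in_def by blast
lemma maxE: "max_indep_in M X B \<Longrightarrow> indep M J \<Longrightarrow> B \<subseteq> J \<Longrightarrow> J \<subseteq> X \<Longrightarrow> J = B"
  unfolding max_indep_in_def by blast
lemma maxI: "indep M B \<Longrightarrow> B \<subseteq> X \<Longrightarrow> (\<And>J. indep M J \<Longrightarrow> B \<subseteq> J \<Longrightarrow> J \<subseteq> X \<Longrightarrow> J = B) \<Longrightarrow> max_indep_in M X B"
  unfolding max_indep_in_def by blast
lemma baseD: "base M B \<Longrightarrow> indep M B"
  unfolding base_def by blast
lemma baseE: "base M B \<Longrightarrow> indep M J \<Longrightarrow> B \<subseteq> J \<Longrightarrow> J = B"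
  unfolding base_def by blast
lemma baseI: "indep M B \<Longrightarrow> (\<And>J. indep M J \<Longrightarrow> B \<subseteq> J \<Longrightarrow> J = B) \<Longrightarrow> base M B"
  unfolding base_def by blast
lemma max_insert: "max_indep_in M X B \<Longrightarrow> x \<in> X \<Longrightarrow> x \<notin> B \<Longrightarrow> \<not> indep M (insert x B)"
  using maxE[of M X B "insert x B"] maxS[of M X B] by blast

lemma max_ground_base:
  assumes m: "matroid M" and B: "max_indep_in M (ground M) B" shows "base M B"
proof (rule baseI)
  show "indep M B" using maxD[OF B] .
  fix J assume "indep M J" "B \<subseteq> J"
  then show "J = B" using maxE[OF B _ _ m_ground[OF m]] by blast
qed

lemma exists_base:
  assumes m: "matroid M" and I: "indep M I" shows "\<exists>B. I \<subseteq> B \<and> base M B"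
proof -
  obtain B where "I \<subseteq> B" "max_indep_in M (ground M) B"
    using m_max[OF m order_refl I m_ground[OF m I]] by blast
  then show ?thesis using max_ground_base[OF m] by metis
qed

lemma base_ext:
  assumes m: "matroid M" and b0: "base M B0" and j: "indep M J"
  shows "\<exists>B. J \<subseteq> B \<and> B \<subseteq> J \<union> B0 \<and> base M B"
proof -
  have g: "J \<union> B0 \<subseteq> ground M" using m_ground[OF m j] m_ground[OF m baseD[OF b0]] by blast
  obtain B where B: "J \<subseteq> B" "max_indep_in M (J \<union> B0) B" using m_max[OF m g j Un_upper1] by blast
  have "base M B"
  proof (rule ccontr)
    assume "\<not> base M B"
    then obtain x where x: "x \<in> B0 - B" "indep M (insert x B)"
      using m_aug[OF m maxD[OF B(2)] _ b0] by blast
    then show False using max_insert[OF B(2), of x] by blast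
  qed
  then show ?thesis using B(1) maxS[OF B(2)] by blast
qed

lemma base_minus:
  assumes m: "matroid M" and b: "base M B" and x: "x \<in> B"
  shows "indep M (B - {x}) \<and> \<not> base M (B - {x})"
proof -
  have "indep M (B - {x})" using m_subset[OF m baseD[OF b] Diff_subset] .
  moreover have "\<not> base M (B - {x})"
  proof
    assume "base M (B - {x})"
    from baseE[OF this baseD[OF b]] x show False by blast
  qed
  ultimately show ?thesis by blast
qed

lemma circ_dep:
  assumes m: "matroid M" and A: "indep M A" and e: "e \<notin> A" "e \<in> ground M"
    and dep: "\<not> indep M (insert e A)" and FA: "F \<subseteq> A"
  shows "\<not> indep M (insert e {f\<in>A. f \<in> F \<or> indep M (insert e (A - {f}))})"
proof
  let ?C = "insert e {f\<in>A. f \<in> F \<or> indep M (insert e (A - {f}))}"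
  assume C: "indep M ?C"
  have g: "insert e A \<subseteq> ground M" using m_ground[OF m A] e by blast
  have "?C \<subseteq> insert e A" by blast
  then obtain B where B: "?C \<subseteq> B" "max_indep_in M (insert e A) B"
    using m_max[OF m g C] by blast
  have Bi: "indep M B" using maxD[OF B(2)] .
  have Bs: "B \<subseteq> insert e A" using maxS[OF B(2)] .
  have "B \<noteq> insert e A" using Bi dep by metis
  then obtain f where f: "f \<in> insert e A" "f \<notin> B" using Bs by blast
  have fe: "f \<noteq> e" using f B(1) by blast
  then have fA: "f \<in> A" using f by blast
  obtain B2 where B2: "A \<subseteq> B2" "base M B2" using exists_base[OF m A] by blast
  have eB2: "e \<notin> B2"
  proof
    assume "e \<in> B2"
    then have "insert e A \<subseteq> B2" using B2 by blast
    then have "indep M (insert e A)" by (rule m_subset[OF m baseD[OF B2(2)]])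
    with dep show False by blast
  qed
  obtain B1 where B1: "B \<subseteq> B1" "B1 \<subseteq> B \<union> B2" "base M B1"
    using base_ext[OF m B2(2) Bi] by blast
  have fB1: "f \<notin> B1"
  proof
    assume "f \<in> B1"
    then have "insert f B \<subseteq> B1" using B1 by blast
    then have "indep M (insert f B)" by (rule m_subset[OF m baseD[OF B1(3)]])
    then show False using max_insert[OF B(2) f(1) f(2)] by blast
  qed
  have fB2: "f \<in> B2" using fA B2 by blast
  note bm = base_minus[OF m B2(2) fB2]
  obtain x where x: "x \<in> B1 - (B2 - {f})" "indep M (insert x (B2 - {f}))"
    using m_aug[OF m conjunct1[OF bm] conjunct2[OF bm] B1(3)] by blast
  have "x \<noteq> f" using x fB1 by blast
  then have xB2: "x \<notin> B2" using x by blast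
  then have "x \<in> B" using x B1 by blast
  then have "x \<in> insert e A" using Bs by blast
  then have "x = e" using xB2 B2 by blast
  then have "insert e (A - {f}) \<subseteq> insert x (B2 - {f})" using B2(1) by blast
  then have "indep M (insert e (A - {f}))" by (rule m_subset[OF m x(2)])
  then have "f \<in> ?C" using fA by blast
  then show False using B(1) f by blast
qed

lemma spans_dep:
  assumes m: "matroid M" and A: "indep M A" and e: "e \<in> ground M" and dep: "\<not> indep M (insert e A)"
  shows "spans M A e"
proof -
  have eA: "e \<notin> A" using A dep by (metis insert_absorb)
  let ?C = "insert e {f\<in>A. f \<in> {} \<or> indep M (insert e (A - {f}))}"
  have "circuit M ?C"
    unfolding circuit_def
  proof (intro conjI allI impI)
    show "?C \<subseteq> ground M" using e m_ground[OF m A] by blast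
    show "\<not> indep M ?C" using circ_dep[OF m A eA e dep empty_subsetI] .
  next
    fix D assume D: "D \<subset> ?C"
    then obtain g where g: "g \<in> ?C" "g \<notin> D" by blast
    show "indep M D"
    proof (cases "g = e")
      case True
      then have "D \<subseteq> A" using D g by blast
      then show ?thesis by (rule m_subset[OF m A])
    next
      case False
      then have i: "indep M (insert e (A - {g}))" using g by auto
      have "D \<subseteq> insert e (A - {g})" using D g by blast
      then show ?thesis by (rule m_subset[OF m i])
    qed
  qed
  then show ?thesis unfolding spans_def by blast
qed

lemma spans_notindep:
  assumes m: "matroid M" and sp: "spans M A e" and AY: "A \<subseteq> Y" and e: "e \<notin> Y"
  shows "\<not> indep M (insert e Y)"
proof
  assume ind: "indep M (insert e Y)"
  have "e \<notin> A" using AY e by blast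
  then obtain C where C: "circuit M C" "e \<in> C" "C - {e} \<subseteq> A" using sp unfolding spans_def by blast
  have "C \<subseteq> insert e Y" using C AY by blast
  then have "indep M C" by (rule m_subset[OF m ind])
  then show False using C unfolding circuit_def by blast
qed

lemma spans_mono: "spans M A e \<Longrightarrow> A \<subseteq> A' \<Longrightarrow> spans M A' e"
  unfolding spans_def by blast
lemma spans_mem: "e \<in> A \<Longrightarrow> spans M A e"
  unfolding spans_def by blast
lemma circD: "circuit M C \<Longrightarrow> \<not> indep M C"
  unfolding circuit_def by blast
lemma circP: "circuit M C \<Longrightarrow> D \<subset> C \<Longrightarrow> indep M D"
  unfolding circuit_def by blast
lemma circS: "circuit M C \<Longrightarrow> C \<subseteq> ground M"
  unfolding circuit_def by blast
lemma spansE: "spans M A e \<Longrightarrow> e \<notin> A \<Longrightarrow> \<exists>C. circuit M C \<and> e \<in> C \<and> C - {e} \<subseteq> A"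
  unfolding spans_def by blast

lemma span_max:
  assumes m: "matroid M" and J: "max_indep_in M Z J" and e: "e \<notin> Z" "e \<in> ground M"
    and sp: "spans M Z e"
  shows "\<not> indep M (insert e J)"
proof
  assume ind: "indep M (insert e J)"
  obtain C where C: "circuit M C" "e \<in> C" "C - {e} \<subseteq> Z" using spansE[OF sp e(1)] by blast
  have "C - {e} \<subset> C" using C(2) by blast
  then have J0: "indep M (C - {e})" by (rule circP[OF C(1)])
  obtain B where B: "insert e J \<subseteq> B" "base M B" using exists_base[OF m ind] by blast
  obtain B2 where B2: "C - {e} \<subseteq> B2" "B2 \<subseteq> (C - {e}) \<union> B" "base M B2"
    using base_ext[OF m B(2) J0] by blast
  have eB2: "e \<notin> B2"
  proof
    assume "e \<in> B2"
    then have "C \<subseteq> B2" using B2 by blast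
    then have "indep M C" by (rule m_subset[OF m baseD[OF B2(3)]])
    then show False using circD[OF C(1)] by blast
  qed
  have eB: "e \<in> B" using B by blast
  note bm = base_minus[OF m B(2) eB]
  obtain x where x: "x \<in> B2 - (B - {e})" "indep M (insert x (B - {e}))"
    using m_aug[OF m conjunct1[OF bm] conjunct2[OF bm] B2(3)] by blast
  have xe: "x \<noteq> e" using x eB2 by blast
  then have xB: "x \<notin> B" using x by blast
  have xB2: "x \<in> B2" using x(1) by blast
  have "x \<in> C - {e}" using B2(2) xB2 xB by blast
  then have xZ: "x \<in> Z" using C(3) by blast
  have eJ: "e \<notin> J" using maxS[OF J] e(1) by blast
  have JB: "J \<subseteq> B" using B(1) by blast
  then have xJ: "x \<notin> J" using xB by blast
  have "insert x J \<subseteq> insert x (B - {e})" using JB eJ by blast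
  then have "indep M (insert x J)" by (rule m_subset[OF m x(2)])
  then show False using max_insert[OF J xZ xJ] by blast
qed

lemma span_trans_indep:
  assumes m: "matroid M" and J: "indep M J" and YJ: "\<forall>y\<in>Y. spans M J y" and Yg: "Y \<subseteq> ground M"
    and sp: "spans M Y e" and e: "e \<in> ground M"
  shows "spans M J e"
proof (rule ccontr)
  assume nsp: "\<not> spans M J e"
  then have eJ: "e \<notin> J" using spans_mem by metis
  have ind: "indep M (insert e J)" using nsp spans_dep[OF m J e] by blast
  have eY: "e \<notin> Y" using YJ nsp by blast
  obtain Y' where Y': "{} \<subseteq> Y'" "max_indep_in M Y Y'" using m_max[OF m Yg m_empty[OF m]] by blast
  have dep: "\<not> indep M (insert e Y')" using span_max[OF m Y'(2) eY e sp] .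
  obtain B where B: "insert e J \<subseteq> B" "base M B" using exists_base[OF m ind] by blast
  obtain B2 where B2: "Y' \<subseteq> B2" "B2 \<subseteq> Y' \<union> B" "base M B2"
    using base_ext[OF m B(2) maxD[OF Y'(2)]] by blast
  have eB2: "e \<notin> B2"
  proof
    assume "e \<in> B2"
    then have "insert e Y' \<subseteq> B2" using B2 by blast
    then have "indep M (insert e Y')" by (rule m_subset[OF m baseD[OF B2(3)]])
    with dep show False by blast
  qed
  have eB: "e \<in> B" using B by blast
  note bm = base_minus[OF m B(2) eB]
  obtain x where x: "x \<in> B2 - (B - {e})" "indep M (insert x (B - {e}))"
    using m_aug[OF m conjunct1[OF bm] conjunct2[OF bm] B2(3)] by blast
  have xe: "x \<noteq> e" using x eB2 by blast
  then have xB: "x \<notin> B" using x by blast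
  then have xY: "x \<in> Y" using x B2 maxS[OF Y'(2)] by blast
  have JB: "J \<subseteq> B - {e}" using B eJ by blast
  have "x \<notin> B - {e}" using xB by blast
  moreover have "spans M J x" using YJ xY by blast
  ultimately have "\<not> indep M (insert x (B - {e}))" using spans_notindep[OF m _ JB] by blast
  then show False using x by blast
qed

lemma span_trans:
  assumes m: "matroid M" and Zg: "Z \<subseteq> ground M" and YZ: "\<forall>y\<in>Y. spans M Z y" and Yg: "Y \<subseteq> ground M"
    and sp: "spans M Y e" and e: "e \<in> ground M"
  shows "spans M Z e"
proof -
  obtain J where J: "{} \<subseteq> J" "max_indep_in M Z J" using m_max[OF m Zg m_empty[OF m]] by blast
  have Ji: "indep M J" using maxD[OF J(2)] .
  have ZJ: "\<forall>z\<in>Z. spans M J z"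
  proof
    fix z assume z: "z \<in> Z"
    show "spans M J z"
    proof (cases "z \<in> J")
      case True then show ?thesis by (rule spans_mem)
    next
      case False
      then have "\<not> indep M (insert z J)" using max_insert[OF J(2) z] by blast
      moreover have "z \<in> ground M" using z Zg by blast
      ultimately show ?thesis using spans_dep[OF m Ji] by blast
    qed
  qed
  have YJ: "\<forall>y\<in>Y. spans M J y"
  proof
    fix y assume y: "y \<in> Y"
    have "spans M Z y" using YZ y by blast
    moreover have "y \<in> ground M" using Yg y by blast
    ultimately show "spans M J y" by (rule span_trans_indep[OF m Ji ZJ Zg])
  qed
  have "spans M J e" using span_trans_indep[OF m Ji YJ Yg sp e] .
  then show ?thesis by (rule spans_mono[OF _ maxS[OF J(2)]])
qed

lemma skew:
  assumes m: "matroid M" and Ba: "indep M Ba" and BbT: "indep M (Bb \<union> T)" and dis: "Bb \<inter> T = {}"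
    and sp: "\<forall>x\<in>Ba. spans M Bb x" and g: "Ba \<union> T \<subseteq> ground M"
  shows "indep M (Ba \<union> T)"
proof (rule ccontr)
  assume nind: "\<not> indep M (Ba \<union> T)"
  obtain J where J: "Ba \<subseteq> J" "max_indep_in M (Ba \<union> T) J" using m_max[OF m g Ba] by blast
  have "J \<noteq> Ba \<union> T" using nind maxD[OF J(2)] by metis
  then obtain t where t: "t \<in> T" "t \<notin> J" using J(1) maxS[OF J(2)] by blast
  obtain B where B: "Bb \<union> T \<subseteq> B" "base M B" using exists_base[OF m BbT] by blast
  obtain J' where J': "J \<subseteq> J'" "J' \<subseteq> J \<union> B" "base M J'"
    using base_ext[OF m B(2) maxD[OF J(2)]] by blast
  have tJ': "t \<notin> J'"
  proof
    assume "t \<in> J'"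
    then have "insert t J \<subseteq> J'" using J' by blast
    then have "indep M (insert t J)" by (rule m_subset[OF m baseD[OF J'(3)]])
    moreover have "t \<in> Ba \<union> T" using t(1) by blast
    ultimately show False using max_insert[OF J(2) _ t(2)] by blast
  qed
  have tB: "t \<in> B" using t B by blast
  note bm = base_minus[OF m B(2) tB]
  obtain x where x: "x \<in> J' - (B - {t})" "indep M (insert x (B - {t}))"
    using m_aug[OF m conjunct1[OF bm] conjunct2[OF bm] J'(3)] by blast
  have "x \<noteq> t" using x tJ' by blast
  then have xB: "x \<notin> B" using x by blast
  then have "x \<in> J" using x J' by blast
  then have "x \<in> Ba" using maxS[OF J(2)] xB B by blast
  then have spx: "spans M Bb x" using sp by blast
  have "Bb \<subseteq> B - {t}" using B dis t by blast
  moreover have "x \<notin> B - {t}" using xB by blast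
  ultimately have "\<not> indep M (insert x (B - {t}))" using spans_notindep[OF m spx] by blast
  then show False using x by blast
qed

lemma indep_dual: "indep (dual M) B \<longleftrightarrow> B \<subseteq> ground M \<and> (\<exists>B0. base M B0 \<and> B \<subseteq> ground M - B0)"
  unfolding indep_def dual_def by simp
lemma indep_restrict: "indep (restrict M X) J \<longleftrightarrow> indep M J \<and> J \<subseteq> X"
  unfolding indep_def restrict_def by simp
lemma ground_restrict: "ground (restrict M X) = X"
  unfolding restrict_def by simp
lemma ground_dual: "ground (dual M) = ground M"
  unfolding dual_def by simp
lemma ground_delete: "ground (delete M X) = ground M - X"
  unfolding delete_def restrict_def by simp
lemma indep_delete: "indep (delete M X) J \<longleftrightarrow> indep M J \<and> J \<subseteq> ground M - X"
  unfolding delete_def by (simp add: indep_restrict)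
lemma ground_contract: "ground (contract M X) = ground M - X"
  unfolding contract_def by (simp add: ground_dual ground_delete)
lemma indep_contract_raw: "indep (contract M X) J \<longleftrightarrow>
   J \<subseteq> ground M - X \<and> (\<exists>B. base (delete (dual M) X) B \<and> J \<subseteq> (ground M - X) - B)"
  unfolding contract_def indep_dual by (simp add: ground_delete ground_dual)
lemma indep_make_loops: "indep (make_loops M X) J \<longleftrightarrow> indep (delete M X) J"
  unfolding make_loops_def direct_sum_def indep_def[of "\<lparr>ground = _ \<union> _, indeps = _\<rparr>"]
  by (simp add: indep_def)

lemma contract_indep:
  assumes m: "matroid M" and I: "indep M I"
  shows "indep (contract M I) J \<longleftrightarrow> J \<subseteq> ground M - I \<and> indep M (J \<union> I)"
proof
  let ?G = "ground M"
  let ?D = "delete (dual M) I"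
  have IG: "I \<subseteq> ?G" using m_ground[OF m I] .
  have indD: "\<And>B. indep ?D B \<longleftrightarrow> B \<subseteq> ?G \<and> (\<exists>B0. base M B0 \<and> B \<subseteq> ?G - B0) \<and> B \<subseteq> ?G - I"
    by (simp add: indep_delete indep_dual ground_dual)
  assume "indep (contract M I) J"
  then obtain B where J: "J \<subseteq> ?G - I" and B: "base ?D B" and JB: "J \<subseteq> (?G - I) - B"
    unfolding indep_contract_raw by blast
  have Bi: "indep ?D B" using baseD[OF B] .
  then obtain B0 where B0: "base M B0" "B \<subseteq> ?G - B0" and BG: "B \<subseteq> ?G" and BI: "B \<subseteq> ?G - I"
    unfolding indD by blast
  have key: "(?G - B) - I \<subseteq> B'" if b': "base M B'" "B \<subseteq> ?G - B'" for B'
  proof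
    fix x assume x: "x \<in> (?G - B) - I"
    show "x \<in> B'"
    proof (rule ccontr)
      assume "x \<notin> B'"
      then have "insert x B \<subseteq> ?G - B'" using x b'(2) by blast
      moreover have "insert x B \<subseteq> ?G" "insert x B \<subseteq> ?G - I" using x BG BI by blast+
      ultimately have "indep ?D (insert x B)" unfolding indD using b'(1) by blast
      then have "insert x B = B" using baseE[OF B] by blast
      then show False using x by blast
    qed
  qed
  have TG: "?G - B \<subseteq> ?G" by blast
  have IT: "I \<subseteq> ?G - B" using IG BI by blast
  obtain B' where B': "I \<subseteq> B'" "max_indep_in M (?G - B) B'" using m_max[OF m TG I IT] by blast
  have bB': "base M B'"
  proof (rule ccontr)
    assume "\<not> base M B'"
    then obtain x where x: "x \<in> B0 - B'" "indep M (insert x B')"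
      using m_aug[OF m maxD[OF B'(2)] _ B0(1)] by blast
    have "x \<in> ?G" using x m_ground[OF m baseD[OF B0(1)]] by blast
    then have "x \<in> ?G - B" using x B0(2) by blast
    then show False using max_insert[OF B'(2)] x by blast
  qed
  have "B \<subseteq> ?G - B'" using BG maxS[OF B'(2)] by blast
  then have "(?G - B) - I \<subseteq> B'" using key bB' by blast
  then have "J \<union> I \<subseteq> B'" using JB B'(1) by blast
  then have "indep M (J \<union> I)" by (rule m_subset[OF m maxD[OF B'(2)]])
  then show "J \<subseteq> ?G - I \<and> indep M (J \<union> I)" using J by blast
next
  let ?G = "ground M"
  let ?D = "delete (dual M) I"
  have indD: "\<And>B. indep ?D B \<longleftrightarrow> B \<subseteq> ?G \<and> (\<exists>B0. base M B0 \<and> B \<subseteq> ?G - B0) \<and> B \<subseteq> ?G - I"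
    by (simp add: indep_delete indep_dual ground_dual)
  assume "J \<subseteq> ?G - I \<and> indep M (J \<union> I)"
  then have J: "J \<subseteq> ?G - I" and JI: "indep M (J \<union> I)" by auto
  obtain B0 where B0: "J \<union> I \<subseteq> B0" "base M B0" using exists_base[OF m JI] by blast
  have B0G: "B0 \<subseteq> ?G" using m_ground[OF m baseD[OF B0(2)]] .
  have "base ?D (?G - B0)"
  proof (rule baseI)
    show "indep ?D (?G - B0)" unfolding indD using B0 by blast
    fix J2 assume J2: "indep ?D J2" "?G - B0 \<subseteq> J2"
    from J2(1)[unfolded indD] obtain B1 where B1: "base M B1" "J2 \<subseteq> ?G - B1" "J2 \<subseteq> ?G" by blast
    have "B1 \<subseteq> ?G" using m_ground[OF m baseD[OF B1(1)]] .
    then have "B1 \<subseteq> B0" using B1 J2(2) by blast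
    then have "B0 = B1" using baseE[OF B1(1) baseD[OF B0(2)]] by blast
    then show "J2 = ?G - B0" using B1 J2 by blast
  qed
  moreover have "J \<subseteq> (?G - I) - (?G - B0)" using J B0 by blast
  ultimately show "indep (contract M I) J" unfolding indep_contract_raw using J by blast
qed

lemma red_indep:
  assumes m: "matroid (M i)" and g: "ground (M i) = E" and I: "indep (M i) (I i)" and i: "i \<in> K"
  shows "indep (reduced_matroid M K E I S i) J \<longleftrightarrow> J \<subseteq> rest_ground K E I \<inter> S i \<and> indep (M i) (J \<union> I i)"
proof -
  let ?U = "\<Union>j \<in> K - {i}. I j"
  let ?R = "rest_ground K E I"
  have eq: "(E - I i) - ?U = ?R" unfolding rest_ground_def using i by blast
  have r: "?R \<subseteq> E - I i" unfolding rest_ground_def using i by blast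
  have "indep (reduced_matroid M K E I S i) J \<longleftrightarrow>
     ((J \<subseteq> E - I i \<and> indep (M i) (J \<union> I i)) \<and> J \<subseteq> ?R) \<and> J \<subseteq> ?R - (?R - S i)"
    unfolding reduced_matroid_def indep_make_loops indep_delete ground_delete ground_contract
      contract_indep[OF m I] g eq ..
  also have "\<dots> \<longleftrightarrow> J \<subseteq> ?R \<inter> S i \<and> indep (M i) (J \<union> I i)"
    using r by blast
  finally show ?thesis .
qed

lemma rest_disj: "i \<in> K \<Longrightarrow> rest_ground K E I \<inter> I i = {}"
  unfolding rest_ground_def by blast
lemma rest_sub: "rest_ground K E I \<subseteq> E"
  unfolding rest_ground_def by blast

lemma lift:
  assumes m: "matroid (M i)" and g: "ground (M i) = E" and I: "indep (M i) (I i)" and i: "i \<in> K"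
    and Y: "Y \<subseteq> rest_ground K E I" and A: "A \<subseteq> Y"
    and sp: "spans (restrict (reduced_matroid M K E I S i) Y) A e" and e: "e \<in> Y" "e \<in> S i"
  shows "spans (M i) (A \<union> I i) e"
proof (cases "e \<in> A")
  case True then show ?thesis by (intro spans_mem) blast
next
  case False
  let ?N = "reduced_matroid M K E I S i"
  note rind = red_indep[where M=M and I=I and i=i and K=K and E=E and S=S, OF m g I i]
  obtain C where C: "circuit (restrict ?N Y) C" "e \<in> C" "C - {e} \<subseteq> A" using spansE[OF sp False] by blast
  have CY: "C \<subseteq> Y" using circS[OF C(1)] unfolding ground_restrict .
  have "C - {e} \<subset> C" using C(2) by blast
  then have "indep (restrict ?N Y) (C - {e})" by (rule circP[OF C(1)])
  then have "indep ?N (C - {e})" unfolding indep_restrict by blast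
  then have C1: "C - {e} \<subseteq> rest_ground K E I \<inter> S i" and C2: "indep (M i) ((C - {e}) \<union> I i)"
    unfolding rind by blast+
  have "\<not> indep ?N C" using circD[OF C(1)] CY unfolding indep_restrict by blast
  moreover have "C \<subseteq> rest_ground K E I \<inter> S i" using C1 C(2) e Y CY by blast
  ultimately have C3: "\<not> indep (M i) (C \<union> I i)" unfolding rind by blast
  have eq: "insert e ((C - {e}) \<union> I i) = C \<union> I i" using C(2) by blast
  have eE: "e \<in> ground (M i)" unfolding g using e Y rest_sub[of K E I] by blast
  have "\<not> indep (M i) (insert e ((C - {e}) \<union> I i))" unfolding eq by (rule C3)
  then have "spans (M i) ((C - {e}) \<union> I i) e" by (rule spans_dep[OF m C2 eE])
  moreover have "(C - {e}) \<union> I i \<subseteq> A \<union> I i" using C(3) by blast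
  ultimately show ?thesis by (rule spans_mono)
qed

lemma lower:
  assumes m: "matroid (M i)" and g: "ground (M i) = E" and I: "indep (M i) (I i)" and i: "i \<in> K"
    and Y: "Y \<subseteq> rest_ground K E I" and A: "A \<subseteq> Y \<inter> S i" and e: "e \<in> Y"
    and sp: "e \<in> S i \<Longrightarrow> spans (M i) (A \<union> I i) e"
  shows "spans (restrict (reduced_matroid M K E I S i) Y) A e"
proof -
  let ?N = "reduced_matroid M K E I S i"
  let ?R = "rest_ground K E I"
  note rind = red_indep[where M=M and I=I and i=i and K=K and E=E and S=S, OF m g I i]
  have disj: "?R \<inter> I i = {}" by (rule rest_disj[OF i])
  have RE: "?R \<subseteq> E" by (rule rest_sub)
  consider "e \<in> A" | "e \<notin> A" "e \<notin> S i" | "e \<notin> A" "e \<in> S i" by blast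
  then show ?thesis
  proof cases
    case 1 then show ?thesis by (rule spans_mem)
  next
    case 2
    have "circuit (restrict ?N Y) {e}"
      unfolding circuit_def ground_restrict
    proof (intro conjI allI impI)
      show "{e} \<subseteq> Y" using e by blast
      show "\<not> indep (restrict ?N Y) {e}" unfolding indep_restrict rind using 2 by blast
    next
      fix D assume "D \<subset> {e}" then have "D = {}" by blast
      then show "indep (restrict ?N Y) D" unfolding indep_restrict rind using I by simp
    qed
    then show ?thesis unfolding spans_def by blast
  next
    case 3
    have spA: "spans (M i) (A \<union> I i) e" using sp 3 by blast
    have eAI: "e \<notin> A \<union> I i" using 3 disj e Y by blast
    have AIg: "A \<union> I i \<subseteq> ground (M i)" using A Y RE m_ground[OF m I] g by blast
    have eg: "e \<in> ground (M i)" using e Y RE g by blast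
    obtain J where J: "I i \<subseteq> J" "max_indep_in (M i) (A \<union> I i) J"
      using m_max[OF m AIg I Un_upper2] by blast
    have Ji: "indep (M i) J" using maxD[OF J(2)] .
    have JS: "J \<subseteq> A \<union> I i" using maxS[OF J(2)] .
    have eJ: "e \<notin> J" using JS eAI by blast
    have dep: "\<not> indep (M i) (insert e J)" using span_max[OF m J(2) eAI eg spA] .
    define P where "P f \<longleftrightarrow> indep (M i) (insert e (J - {f}))" for f
    have Cdep: "\<not> indep (M i) (insert e {f \<in> J. f \<in> I i \<or> P f})"
      unfolding P_def using circ_dep[OF m Ji eJ eg dep J(1)] .
    let ?C = "insert e {f \<in> J - I i. P f}"
    have eqC: "?C \<union> I i = insert e {f \<in> J. f \<in> I i \<or> P f}" using J(1) by blast
    have "circuit (restrict ?N Y) ?C"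
      unfolding circuit_def ground_restrict
    proof (intro conjI allI impI)
      show "?C \<subseteq> Y" using JS A e by blast
      show "\<not> indep (restrict ?N Y) ?C" unfolding indep_restrict rind eqC using Cdep by blast
    next
      fix D assume D: "D \<subset> ?C"
      then obtain gg where gg: "gg \<in> ?C" "gg \<notin> D" by blast
      have DS: "D \<subseteq> ?R \<inter> S i" "D \<subseteq> Y" using D JS A 3 e Y by blast+
      have "indep (M i) (D \<union> I i)"
      proof (cases "gg = e")
        case True
        then have "D \<union> I i \<subseteq> J" using D gg J(1) by blast
        then show ?thesis by (rule m_subset[OF m Ji])
      next
        case False
        then have gJ: "gg \<in> J - I i" "P gg" using gg by blast+
        from gJ(2) have ind: "indep (M i) (insert e (J - {gg}))" unfolding P_def .
        have "D \<union> I i \<subseteq> insert e (J - {gg})" using D gg gJ J(1) by blast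
        then show ?thesis by (rule m_subset[OF m ind])
      qed
      then show "indep (restrict ?N Y) D" unfolding indep_restrict rind using DS by blast
    qed
    moreover have "?C - {e} \<subseteq> A" using JS by blast
    ultimately show ?thesis unfolding spans_def by blast
  qed
qed

lemma tight_spans:
  assumes m: "matroid (M i)" and g: "ground (M i) = E" and I: "indep (M i) (I i)" and i: "i \<in> K"
    and tight: "tight_set (reduced_matroid M K E I S) K (rest_ground K E I) X"
    and cov: "covering (\<lambda>j. restrict (reduced_matroid M K E I S j) X) K X Q"
    and e: "e \<in> X" "e \<in> S i"
  shows "spans (M i) (Q i \<union> I i) e"
proof -
  have X: "X \<subseteq> rest_ground K E I" using tight unfolding tight_set_def by blast
  have all: "\<forall>R. covering (\<lambda>j. restrict (reduced_matroid M K E I S j) X) K X R \<longrightarrow>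
      (\<forall>j\<in>K. spanning (restrict (reduced_matroid M K E I S j) X) (R j))"
    using tight unfolding tight_set_def tight_family_def by blast
  have "spanning (restrict (reduced_matroid M K E I S i) X) (Q i)" using all cov i by blast
  then have sp: "spans (restrict (reduced_matroid M K E I S i) X) (Q i) e" and QX: "Q i \<subseteq> X"
    unfolding spanning_def spans_set_def ground_restrict using e by blast+
  show ?thesis by (rule lift[OF m g I i X QX sp e])
qed

theorem lemma3p11:
  fixes M :: "'k \<Rightarrow> 'a matroid" and K :: "'k set" and E :: "'a set"
    and I S R :: "'k \<Rightarrow> 'a set" and X :: "'a set"
  assumes fam: "matroid_family M K E"
    and F: "valid_pairs M K E I S"
    and feas: "feasible M K E I S"
    and tight: "tight_set (reduced_matroid M K E I S) K (rest_ground K E I) X"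
    and cov: "covering (\<lambda>i. restrict (reduced_matroid M K E I S i) X) K X R"
  shows "valid_pairs M K E (\<lambda>i. I i \<union> R i) S
       \<and> extension K I S (\<lambda>i. I i \<union> R i) S
       \<and> feasible M K E (\<lambda>i. I i \<union> R i) S
       \<and> (\<forall>i \<in> K. spans_set (M i) (I i \<union> R i) (X \<inter> S i))
       \<and> ((\<forall>Y. tight_set (reduced_matroid M K E I S) K (rest_ground K E I) Y \<longrightarrow> Y \<subseteq> X)
           \<longrightarrow> (\<forall>Z. tight_set (reduced_matroid M K E (\<lambda>i. I i \<union> R i) S) K
                        (rest_ground K E (\<lambda>i. I i \<union> R i)) Z \<longrightarrow> Z = {}))"
proof -
  let ?N = "reduced_matroid M K E I S"
  let ?R = "rest_ground K E I"
  let ?N' = "reduced_matroid M K E (\<lambda>i. I i \<union> R i) S"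
  let ?R' = "rest_ground K E (\<lambda>i. I i \<union> R i)"
  have mi: "matroid (M i)" and gi: "ground (M i) = E" if "i \<in> K" for i
    using fam that unfolding matroid_family_def by blast+
  have IS: "I i \<subseteq> S i" and SE: "S i \<subseteq> E" and Ii: "indep (M i) (I i)" and Ssp: "spanning (M i) (S i)"
    if "i \<in> K" for i
    using F that unfolding valid_pairs_def by blast+
  have Idis: "I i \<inter> I j = {}" if "i \<in> K" "j \<in> K" "i \<noteq> j" for i j
    using F that unfolding valid_pairs_def by blast
  have SU: "(\<Union>i\<in>K. S i) = E" using F unfolding valid_pairs_def by blast
  have rind: "indep (?N i) J \<longleftrightarrow> J \<subseteq> ?R \<inter> S i \<and> indep (M i) (J \<union> I i)" if i: "i \<in> K" for i J
    using red_indep[where M=M and I=I and i=i and K=K and E=E and S=S, OF mi[OF i] gi[OF i] Ii[OF i] i] .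
  have RE: "?R \<subseteq> E" by (rule rest_sub)
  have RIdis: "?R \<inter> I i = {}" if "i \<in> K" for i by (rule rest_disj[OF that])
  have XR: "X \<subseteq> ?R" using tight unfolding tight_set_def by blast
  have tall: "\<forall>Q. covering (\<lambda>i. restrict (?N i) X) K X Q \<longrightarrow> (\<forall>i\<in>K. spanning (restrict (?N i) X) (Q i))"
    using tight unfolding tight_set_def tight_family_def by blast
  have covi: "indep (restrict (?N i) X) (R i)" if "i \<in> K" for i using cov that unfolding covering_def by blast
  have covU: "(\<Union>i\<in>K. R i) = X" using cov unfolding covering_def by blast
  have RX: "R i \<subseteq> X" and RRS: "R i \<subseteq> ?R \<inter> S i" and RIi: "indep (M i) (R i \<union> I i)" if i: "i \<in> K" for i
    using covi[OF i] unfolding indep_restrict rind[OF i] by blast+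
  have II'i: "indep (M i) (I i \<union> R i)" if "i \<in> K" for i using RIi[OF that] by (simp add: Un_commute)
  have tsp: "spans (M i) (Q i \<union> I i) e"
    if "covering (\<lambda>i. restrict (?N i) X) K X Q" "i \<in> K" "e \<in> X" "e \<in> S i" for Q i e
    using tight_spans[where M=M and I=I and i=i and K=K and E=E and S=S,
        OF mi[OF that(2)] gi[OF that(2)] Ii[OF that(2)] that(2) tight that(1) that(3) that(4)] .
  have RIdis2: "R i \<inter> I j = {}" if "i \<in> K" "j \<in> K" for i j
    using RRS[OF that(1)] RIdis[OF that(2)] by blast
  have Rdis: "R i \<inter> R j = {}" if i: "i \<in> K" and j: "j \<in> K" and ij: "i \<noteq> j" for i j
  proof (rule ccontr)
    assume "R i \<inter> R j \<noteq> {}"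
    then obtain x where x: "x \<in> R i" "x \<in> R j" by blast
    define Q where "Q = R(j := R j - {x})"
    have Qc: "covering (\<lambda>i. restrict (?N i) X) K X Q"
      unfolding covering_def
    proof
      show "\<forall>k\<in>K. indep (restrict (?N k) X) (Q k)"
      proof
        fix k assume k: "k \<in> K"
        show "indep (restrict (?N k) X) (Q k)"
        proof (cases "k = j")
          case True
          have "(R j - {x}) \<union> I j \<subseteq> R j \<union> I j" by blast
          then have "indep (M j) ((R j - {x}) \<union> I j)" by (rule m_subset[OF mi[OF j] RIi[OF j]])
          moreover have "R j - {x} \<subseteq> ?R \<inter> S j" "R j - {x} \<subseteq> X" using RRS[OF j] RX[OF j] by blast+
          ultimately have "indep (restrict (?N j) X) (R j - {x})" unfolding indep_restrict rind[OF j] by blast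
          then show ?thesis using True unfolding Q_def by simp
        next
          case False then show ?thesis using covi[OF k] unfolding Q_def by simp
        qed
      qed
      show "(\<Union>k\<in>K. Q k) = X"
      proof
        show "(\<Union>k\<in>K. Q k) \<subseteq> X" using covU unfolding Q_def by auto
        show "X \<subseteq> (\<Union>k\<in>K. Q k)"
        proof
          fix y assume "y \<in> X"
          then obtain k where k: "k \<in> K" "y \<in> R k" using covU by blast
          show "y \<in> (\<Union>k\<in>K. Q k)"
          proof (cases "k = j \<and> y = x")
            case True
            then have "y \<in> Q i" using x ij unfolding Q_def by simp
            then show ?thesis using i by blast
          next
            case False
            then have "y \<in> Q k" using k unfolding Q_def by auto
            then show ?thesis using k by blast
          qed
        qed
      qed
    qed
    have "spanning (restrict (?N j) X) (Q j)" using tall Qc j by blast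
    then have sp: "spans (restrict (?N j) X) (R j - {x}) x"
      unfolding spanning_def spans_set_def ground_restrict Q_def using x RX[OF j] by auto
    have "x \<notin> R j - {x}" by blast
    then obtain C where C: "circuit (restrict (?N j) X) C" "x \<in> C" "C - {x} \<subseteq> R j - {x}"
      using spansE[OF sp] by blast
    have CR: "C \<subseteq> R j" using C(2,3) x(2) by blast
    have "C \<union> I j \<subseteq> R j \<union> I j" using CR by blast
    then have "indep (M j) (C \<union> I j)" by (rule m_subset[OF mi[OF j] RIi[OF j]])
    moreover have "C \<subseteq> ?R \<inter> S j" "C \<subseteq> X" using CR RRS[OF j] RX[OF j] by blast+
    ultimately have "indep (restrict (?N j) X) C" unfolding indep_restrict rind[OF j] by blast
    then show False using circD[OF C(1)] by blast
  qed
  have D: "\<forall>i\<in>K. spans_set (M i) (I i \<union> R i) (X \<inter> S i)"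
  proof
    fix i assume i: "i \<in> K"
    show "spans_set (M i) (I i \<union> R i) (X \<inter> S i)"
      unfolding spans_set_def
    proof
      fix e assume e: "e \<in> X \<inter> S i"
      have "spans (M i) (R i \<union> I i) e" using tsp[OF cov i] e by blast
      then show "spans (M i) (I i \<union> R i) e" by (simp add: Un_commute)
    qed
  qed
  have A: "valid_pairs M K E (\<lambda>i. I i \<union> R i) S"
    unfolding valid_pairs_def
  proof (intro conjI)
    show "\<forall>i\<in>K. I i \<union> R i \<subseteq> S i \<and> S i \<subseteq> E \<and> indep (M i) (I i \<union> R i) \<and> spanning (M i) (S i)"
    proof
      fix i assume i: "i \<in> K"
      show "I i \<union> R i \<subseteq> S i \<and> S i \<subseteq> E \<and> indep (M i) (I i \<union> R i) \<and> spanning (M i) (S i)"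
        using IS[OF i] RRS[OF i] SE[OF i] II'i[OF i] Ssp[OF i] by blast
    qed
    show "\<forall>i\<in>K. \<forall>j\<in>K. i \<noteq> j \<longrightarrow> (I i \<union> R i) \<inter> (I j \<union> R j) = {}"
    proof (intro ballI impI)
      fix i j assume i: "i \<in> K" and j: "j \<in> K" and ij: "i \<noteq> j"
      show "(I i \<union> R i) \<inter> (I j \<union> R j) = {}"
        using Idis[OF i j ij] Rdis[OF i j ij] RIdis2[OF i j] RIdis2[OF j i] by blast
    qed
    show "(\<Union>i\<in>K. S i) = E" by (rule SU)
  qed
  have B: "extension K I S (\<lambda>i. I i \<union> R i) S"
    unfolding extension_def
  proof
    fix i assume i: "i \<in> K"
    show "I i \<subseteq> I i \<union> R i \<and> I i \<union> R i \<subseteq> S i \<and> S i \<subseteq> S i"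
      using IS[OF i] RRS[OF i] by blast
  qed
  have CF: "covering_feasible M K E (\<lambda>i. I i \<union> R i) S"
  proof -
    obtain R0 where R0c: "covering M K E R0" and R0b: "\<forall>i\<in>K. I i \<subseteq> R0 i \<and> R0 i \<subseteq> S i"
      using feas unfolding feasible_def covering_feasible_def by blast
    have R0i: "indep (M i) (R0 i)" if "i \<in> K" for i using R0c that unfolding covering_def by blast
    have R0U: "(\<Union>i\<in>K. R0 i) = E" using R0c unfolding covering_def by blast
    have Qc: "covering (\<lambda>i. restrict (?N i) X) K X (\<lambda>i. R0 i \<inter> X)"
      unfolding covering_def
    proof
      show "\<forall>i\<in>K. indep (restrict (?N i) X) (R0 i \<inter> X)"
      proof
        fix i assume i: "i \<in> K"
        have "(R0 i \<inter> X) \<union> I i \<subseteq> R0 i" using R0b i by blast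
        then have "indep (M i) ((R0 i \<inter> X) \<union> I i)" by (rule m_subset[OF mi[OF i] R0i[OF i]])
        moreover have "R0 i \<inter> X \<subseteq> ?R \<inter> S i" using XR R0b i by blast
        ultimately show "indep (restrict (?N i) X) (R0 i \<inter> X)" unfolding indep_restrict rind[OF i] by blast
      qed
      show "(\<Union>i\<in>K. R0 i \<inter> X) = X" using R0U XR RE by blast
    qed
    have spQ: "spans (M i) ((R0 i \<inter> X) \<union> I i) e" if "i \<in> K" "e \<in> X" "e \<in> S i" for i e
      using tsp[OF Qc that] by simp
    define R' where "R' = (\<lambda>i. I i \<union> R i \<union> (R0 i \<inter> ?R - X))"
    have R'i: "indep (M i) (R' i)" if i: "i \<in> K" for i
    proof -
      have "indep (M i) ((I i \<union> R i) \<union> (R0 i \<inter> ?R - X))"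
      proof (rule skew[where Bb = "(R0 i \<inter> X) \<union> I i", OF mi[OF i] II'i[OF i]])
        have "((R0 i \<inter> X) \<union> I i) \<union> (R0 i \<inter> ?R - X) \<subseteq> R0 i" using R0b i by blast
        then show "indep (M i) (((R0 i \<inter> X) \<union> I i) \<union> (R0 i \<inter> ?R - X))"
          by (rule m_subset[OF mi[OF i] R0i[OF i]])
        show "((R0 i \<inter> X) \<union> I i) \<inter> (R0 i \<inter> ?R - X) = {}" using RIdis[OF i] by blast
        show "\<forall>x\<in>I i \<union> R i. spans (M i) ((R0 i \<inter> X) \<union> I i) x"
        proof
          fix x assume x: "x \<in> I i \<union> R i"
          show "spans (M i) ((R0 i \<inter> X) \<union> I i) x"
          proof (cases "x \<in> I i")
            case True then show ?thesis by (intro spans_mem) blast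
          next
            case False then have "x \<in> R i" using x by blast
            then have "x \<in> X" "x \<in> S i" using RX[OF i] RRS[OF i] by blast+
            then show ?thesis by (rule spQ[OF i])
          qed
        qed
        show "(I i \<union> R i) \<union> (R0 i \<inter> ?R - X) \<subseteq> ground (M i)"
          using gi[OF i] IS[OF i] SE[OF i] RRS[OF i] RE by blast
      qed
      then show ?thesis unfolding R'_def .
    qed
    have "covering M K E R'"
      unfolding covering_def
    proof
      show "\<forall>i\<in>K. indep (M i) (R' i)" using R'i by blast
      show "(\<Union>i\<in>K. R' i) = E"
      proof
        show "(\<Union>i\<in>K. R' i) \<subseteq> E"
        proof
          fix y assume "y \<in> (\<Union>i\<in>K. R' i)"
          then obtain i where i: "i \<in> K" "y \<in> R' i" by blast
          then show "y \<in> E" unfolding R'_def using IS[OF i(1)] SE[OF i(1)] RRS[OF i(1)] RE by blast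
        qed
        show "E \<subseteq> (\<Union>i\<in>K. R' i)"
        proof
          fix y assume y: "y \<in> E"
          show "y \<in> (\<Union>i\<in>K. R' i)"
          proof (cases "\<exists>j\<in>K. y \<in> I j")
            case True then show ?thesis unfolding R'_def by blast
          next
            case False
            then have yR: "y \<in> ?R" using y unfolding rest_ground_def by blast
            show ?thesis
            proof (cases "y \<in> X")
              case True
              then obtain j where "j \<in> K" "y \<in> R j" using covU by blast
              then show ?thesis unfolding R'_def by blast
            next
              case False
              obtain j where "j \<in> K" "y \<in> R0 j" using R0U y by blast
              then show ?thesis unfolding R'_def using False yR by blast
            qed
          qed
        qed
      qed
    qed
    moreover have "\<forall>i\<in>K. I i \<union> R i \<subseteq> R' i \<and> R' i \<subseteq> S i"
    proof
      fix i assume i: "i \<in> K"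
      show "I i \<union> R i \<subseteq> R' i \<and> R' i \<subseteq> S i" unfolding R'_def using IS[OF i] RRS[OF i] R0b i by blast
    qed
    ultimately show ?thesis unfolding covering_feasible_def by blast
  qed
  have PF: "packing_feasible M K E (\<lambda>i. I i \<union> R i) S"
  proof -
    obtain P0 where P0p: "packing M K E P0" and P0b: "\<forall>i\<in>K. I i \<subseteq> P0 i \<and> P0 i \<subseteq> S i"
      using feas unfolding feasible_def packing_feasible_def by blast
    have P0dis: "P0 i \<inter> P0 j = {}" if "i \<in> K" "j \<in> K" "i \<noteq> j" for i j
      using P0p that unfolding packing_def by blast
    have P0sp: "spanning (M i) (P0 i)" if "i \<in> K" for i using P0p that unfolding packing_def by blast
    define P' where "P' = (\<lambda>i. I i \<union> R i \<union> (P0 i - X))"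
    have "packing M K E P'"
      unfolding packing_def
    proof
      show "\<forall>i\<in>K. \<forall>j\<in>K. i \<noteq> j \<longrightarrow> P' i \<inter> P' j = {}"
      proof (intro ballI impI)
        fix i j assume i: "i \<in> K" and j: "j \<in> K" and ij: "i \<noteq> j"
        show "P' i \<inter> P' j = {}" unfolding P'_def
          using Idis[OF i j ij] Rdis[OF i j ij] RIdis2[OF i j] RIdis2[OF j i] P0dis[OF i j ij]
            P0b i j RX[OF i] RX[OF j] by blast
      qed
      show "\<forall>i\<in>K. spanning (M i) (P' i)"
      proof
        fix i assume i: "i \<in> K"
        have P0g: "P0 i \<subseteq> ground (M i)" and P0s: "\<forall>e\<in>ground (M i). spans (M i) (P0 i) e"
          using P0sp[OF i] unfolding spanning_def spans_set_def by blast+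
        have P'g: "P' i \<subseteq> ground (M i)" unfolding P'_def using P0b i IS[OF i] SE[OF i] RRS[OF i] gi[OF i] by blast
        have YZ: "\<forall>y\<in>P0 i. spans (M i) (P' i) y"
        proof
          fix y assume y: "y \<in> P0 i"
          show "spans (M i) (P' i) y"
          proof (cases "y \<in> X")
            case True
            then have "y \<in> X \<inter> S i" using y P0b i by blast
            then have "spans (M i) (I i \<union> R i) y" using D i unfolding spans_set_def by blast
            then show ?thesis by (rule spans_mono) (unfold P'_def, blast)
          next
            case False then show ?thesis unfolding P'_def using y by (intro spans_mem) blast
          qed
        qed
        show "spanning (M i) (P' i)"
          unfolding spanning_def spans_set_def
        proof (intro conjI ballI)
          show "P' i \<subseteq> ground (M i)" by (rule P'g)
          fix e assume e: "e \<in> ground (M i)"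
          show "spans (M i) (P' i) e" using span_trans[OF mi[OF i] P'g YZ P0g] P0s e by blast
        qed
      qed
    qed
    moreover have "\<forall>i\<in>K. I i \<union> R i \<subseteq> P' i \<and> P' i \<subseteq> S i"
    proof
      fix i assume i: "i \<in> K"
      show "I i \<union> R i \<subseteq> P' i \<and> P' i \<subseteq> S i" unfolding P'_def using IS[OF i] RRS[OF i] P0b i by blast
    qed
    ultimately show ?thesis unfolding packing_feasible_def by blast
  qed
  have R'eq: "?R' = ?R - X"
  proof -
    have "(\<Union>j\<in>K. I j \<union> R j) = (\<Union>j\<in>K. I j) \<union> X" using covU by (simp add: UN_Un_distrib)
    then show ?thesis unfolding rest_ground_def by blast
  qed
  have Emax: "(\<forall>Y. tight_set ?N K ?R Y \<longrightarrow> Y \<subseteq> X) \<longrightarrow> (\<forall>Z. tight_set ?N' K ?R' Z \<longrightarrow> Z = {})"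
  proof (intro impI allI)
    fix Z assume maxX: "\<forall>Y. tight_set ?N K ?R Y \<longrightarrow> Y \<subseteq> X" and tZ: "tight_set ?N' K ?R' Z"
    have ZR': "Z \<subseteq> ?R'" using tZ unfolding tight_set_def by blast
    have ZRX: "Z \<subseteq> ?R - X" using ZR' R'eq by simp
    obtain C where C: "covering (\<lambda>i. restrict (?N' i) Z) K Z C"
      using tZ unfolding tight_set_def tight_family_def by blast
    have rind': "indep (?N' i) J \<longleftrightarrow> J \<subseteq> ?R' \<inter> S i \<and> indep (M i) (J \<union> (I i \<union> R i))"
      if i: "i \<in> K" for i J
      using red_indep[where M=M and I="\<lambda>i. I i \<union> R i" and i=i and K=K and E=E and S=S,
          OF mi[OF i] gi[OF i] II'i[OF i] i] by simp
    have Ci: "C i \<subseteq> Z" "C i \<subseteq> ?R' \<inter> S i" "indep (M i) (C i \<union> (I i \<union> R i))" if i: "i \<in> K" for i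
    proof -
      have "indep (restrict (?N' i) Z) (C i)" using C i unfolding covering_def by blast
      then show "C i \<subseteq> Z" "C i \<subseteq> ?R' \<inter> S i" "indep (M i) (C i \<union> (I i \<union> R i))"
        unfolding indep_restrict rind'[OF i] by blast+
    qed
    have CU: "(\<Union>i\<in>K. C i) = Z" using C unfolding covering_def by blast
    have tXZ: "tight_set ?N K ?R (X \<union> Z)"
      unfolding tight_set_def tight_family_def
    proof (intro conjI)
      show "X \<union> Z \<subseteq> ?R" using XR ZRX by blast
      show "\<exists>Q. covering (\<lambda>i. restrict (?N i) (X \<union> Z)) K (X \<union> Z) Q"
      proof (rule exI[of _ "\<lambda>i. R i \<union> C i"])
        show "covering (\<lambda>i. restrict (?N i) (X \<union> Z)) K (X \<union> Z) (\<lambda>i. R i \<union> C i)"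
          unfolding covering_def
        proof
          show "\<forall>i\<in>K. indep (restrict (?N i) (X \<union> Z)) (R i \<union> C i)"
          proof
            fix i assume i: "i \<in> K"
            have "(R i \<union> C i) \<union> I i = C i \<union> (I i \<union> R i)" by blast
            then have "indep (M i) ((R i \<union> C i) \<union> I i)" using Ci(3)[OF i] by simp
            moreover have "R i \<union> C i \<subseteq> ?R \<inter> S i" using RRS[OF i] Ci(2)[OF i] R'eq by blast
            moreover have "R i \<union> C i \<subseteq> X \<union> Z" using RX[OF i] Ci(1)[OF i] by blast
            ultimately show "indep (restrict (?N i) (X \<union> Z)) (R i \<union> C i)"
              unfolding indep_restrict rind[OF i] by blast
          qed
          show "(\<Union>i\<in>K. R i \<union> C i) = X \<union> Z" using covU CU by (simp add: UN_Un_distrib)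
        qed
      qed
      show "\<forall>D. covering (\<lambda>i. restrict (?N i) (X \<union> Z)) K (X \<union> Z) D \<longrightarrow>
              (\<forall>i\<in>K. spanning (restrict (?N i) (X \<union> Z)) (D i))"
      proof (intro allI impI ballI)
        fix D i assume Dc: "covering (\<lambda>i. restrict (?N i) (X \<union> Z)) K (X \<union> Z) D" and i: "i \<in> K"
        have Di: "D j \<subseteq> X \<union> Z" "D j \<subseteq> ?R \<inter> S j" "indep (M j) (D j \<union> I j)" if j: "j \<in> K" for j
        proof -
          have "indep (restrict (?N j) (X \<union> Z)) (D j)" using Dc j unfolding covering_def by blast
          then show "D j \<subseteq> X \<union> Z" "D j \<subseteq> ?R \<inter> S j" "indep (M j) (D j \<union> I j)"
            unfolding indep_restrict rind[OF j] by blast+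
        qed
        have DU: "(\<Union>j\<in>K. D j) = X \<union> Z" using Dc unfolding covering_def by blast
        have DXc: "covering (\<lambda>j. restrict (?N j) X) K X (\<lambda>j. D j \<inter> X)"
          unfolding covering_def
        proof
          show "\<forall>j\<in>K. indep (restrict (?N j) X) (D j \<inter> X)"
          proof
            fix j assume j: "j \<in> K"
            have "(D j \<inter> X) \<union> I j \<subseteq> D j \<union> I j" by blast
            then have "indep (M j) ((D j \<inter> X) \<union> I j)" by (rule m_subset[OF mi[OF j] Di(3)[OF j]])
            then show "indep (restrict (?N j) X) (D j \<inter> X)"
              unfolding indep_restrict rind[OF j] using Di(2)[OF j] by blast
          qed
          show "(\<Union>j\<in>K. D j \<inter> X) = X" using DU by blast
        qed
        have spDX: "spans (M j) ((D j \<inter> X) \<union> I j) e" if "j \<in> K" "e \<in> X" "e \<in> S j" for j e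
          using tsp[OF DXc that] by simp
        have DZc: "covering (\<lambda>j. restrict (?N' j) Z) K Z (\<lambda>j. D j \<inter> Z)"
          unfolding covering_def
        proof
          show "\<forall>j\<in>K. indep (restrict (?N' j) Z) (D j \<inter> Z)"
          proof
            fix j assume j: "j \<in> K"
            have sk: "indep (M j) ((I j \<union> R j) \<union> (D j \<inter> Z))"
            proof (rule skew[where Bb = "(D j \<inter> X) \<union> I j", OF mi[OF j] II'i[OF j]])
              have "((D j \<inter> X) \<union> I j) \<union> (D j \<inter> Z) \<subseteq> D j \<union> I j" by blast
              then show "indep (M j) (((D j \<inter> X) \<union> I j) \<union> (D j \<inter> Z))"
                by (rule m_subset[OF mi[OF j] Di(3)[OF j]])
              show "((D j \<inter> X) \<union> I j) \<inter> (D j \<inter> Z) = {}" using ZRX RIdis[OF j] by blast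
              show "\<forall>x\<in>I j \<union> R j. spans (M j) ((D j \<inter> X) \<union> I j) x"
              proof
                fix x assume x: "x \<in> I j \<union> R j"
                show "spans (M j) ((D j \<inter> X) \<union> I j) x"
                proof (cases "x \<in> I j")
                  case True then show ?thesis by (intro spans_mem) blast
                next
                  case False then have "x \<in> R j" using x by blast
                  then have "x \<in> X" "x \<in> S j" using RX[OF j] RRS[OF j] by blast+
                  then show ?thesis by (rule spDX[OF j])
                qed
              qed
              show "(I j \<union> R j) \<union> (D j \<inter> Z) \<subseteq> ground (M j)"
                using gi[OF j] IS[OF j] SE[OF j] RRS[OF j] Di(2)[OF j] RE by blast
            qed
            have "(D j \<inter> Z) \<union> (I j \<union> R j) = (I j \<union> R j) \<union> (D j \<inter> Z)" by blast
            then have "indep (M j) ((D j \<inter> Z) \<union> (I j \<union> R j))" using sk by simp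
            moreover have "D j \<inter> Z \<subseteq> ?R' \<inter> S j" using ZR' Di(2)[OF j] by blast
            ultimately show "indep (restrict (?N' j) Z) (D j \<inter> Z)"
              unfolding indep_restrict rind'[OF j] by blast
          qed
          show "(\<Union>j\<in>K. D j \<inter> Z) = Z" using DU ZRX by blast
        qed
        have spDZ: "spans (M i) ((D i \<inter> Z) \<union> (I i \<union> R i)) e" if "e \<in> Z" "e \<in> S i" for e
          using tight_spans[where M=M and I="\<lambda>i. I i \<union> R i" and i=i and K=K and E=E and S=S,
              OF mi[OF i] gi[OF i] II'i[OF i] i tZ DZc that] by simp
        show "spanning (restrict (?N i) (X \<union> Z)) (D i)"
          unfolding spanning_def spans_set_def ground_restrict
        proof (intro conjI ballI)
          show "D i \<subseteq> X \<union> Z" by (rule Di(1)[OF i])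
          fix e assume e: "e \<in> X \<union> Z"
          have XZR: "X \<union> Z \<subseteq> ?R" using XR ZRX by blast
          have DXZ: "D i \<subseteq> (X \<union> Z) \<inter> S i" using Di(1)[OF i] Di(2)[OF i] by blast
          have sp: "spans (M i) (D i \<union> I i) e" if eS: "e \<in> S i"
          proof (cases "e \<in> X")
            case True
            have "spans (M i) ((D i \<inter> X) \<union> I i) e" by (rule spDX[OF i True eS])
            then show ?thesis by (rule spans_mono) blast
          next
            case False
            then have eZ: "e \<in> Z" using e by blast
            have Zg: "D i \<union> I i \<subseteq> ground (M i)" using Di(2)[OF i] RE IS[OF i] SE[OF i] gi[OF i] by blast
            have Yg: "(D i \<inter> Z) \<union> (I i \<union> R i) \<subseteq> ground (M i)"
              using Di(2)[OF i] RE IS[OF i] SE[OF i] RRS[OF i] gi[OF i] by blast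
            have YZ: "\<forall>y\<in>(D i \<inter> Z) \<union> (I i \<union> R i). spans (M i) (D i \<union> I i) y"
            proof
              fix y assume y: "y \<in> (D i \<inter> Z) \<union> (I i \<union> R i)"
              show "spans (M i) (D i \<union> I i) y"
              proof (cases "y \<in> R i")
                case True
                then have "y \<in> X" "y \<in> S i" using RX[OF i] RRS[OF i] by blast+
                then have "spans (M i) ((D i \<inter> X) \<union> I i) y" by (rule spDX[OF i])
                then show ?thesis by (rule spans_mono) blast
              next
                case False then have "y \<in> D i \<union> I i" using y by blast
                then show ?thesis by (rule spans_mem)
              qed
            qed
            have eg: "e \<in> ground (M i)" using eS SE[OF i] gi[OF i] by blast
            show ?thesis by (rule span_trans[OF mi[OF i] Zg YZ Yg spDZ[OF eZ eS] eg])
          qed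
          show "spans (restrict (?N i) (X \<union> Z)) (D i) e"
            by (rule lower[where M=M and I=I and i=i and K=K and E=E and S=S,
                  OF mi[OF i] gi[OF i] Ii[OF i] i XZR DXZ e sp])
        qed
      qed
    qed
    then have "X \<union> Z \<subseteq> X" using maxX by blast
    then show "Z = {}" using ZRX by blast
  qed
  have Cfeas: "feasible M K E (\<lambda>i. I i \<union> R i) S" unfolding feasible_def using CF PF by blast
  show ?thesis using A B Cfeas D Emax by blast
qed

end
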